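(* Let $p,n\ge1$, let $a_1,\dots,a_n\in\mathbb{C}$ be distinct, let $m_1,\dots,m_n\ge1$ be integers, let $C_0$ and $B_k^{(j)}$ be complex $p\times p$ matrices, let $\|\cdot\|$ be any induced matrix norm, and let $$R(\lambda)=I\lambda-C_0+\sum_{j=1}^n\sum_{k=1}^{m_j}\frac{B_k^{(j)}}{(\lambda-a_j)^k}.$$ If $\lambda_0$ is an eigenvalue of $R(\lambda)$, then $$|\lambda_0|\le\max_{1\le j\le n}\Big\{|a_j|+\cos\Big(\frac{\pi}{m_j+1}\Big),\ \|C_0\|\Big\}+\frac12\left(\sqrt{\sum_{j=1}^n m_j}+\sqrt{\sum_{j=1}^n\sum_{k=1}^{m_j}\|B_k^{(j)}\|^2}\right).$$
   Context: A scalar $\lambda_0\in\mathbb{C}\setminus\{a_1,\dots,a_n\}$ is an eigenvalue of $R(\lambda)$ if there is a nonzero $v\in\mathbb{C}^p$ with $R(\lambda_0)v=0$. *)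

theory Defs
  imports "HOL-Analysis.Analysis"
begin

definition is_vector_norm :: "(complex^'p \<Rightarrow> real) \<Rightarrow> bool" where
  "is_vector_norm N \<longleftrightarrow>
     (\<forall>x. N x = 0 \<longleftrightarrow> x = 0) \<and>
     (\<forall>c x. N (c *s x) = cmod c * N x) \<and>
     (\<forall>x y. N (x + y) \<le> N x + N y)"

definition induced_norm :: "(complex^'p \<Rightarrow> real) \<Rightarrow> complex^'p^'p \<Rightarrow> real" where
  "induced_norm N A = (SUP x\<in>{x. x \<noteq> 0}. N (A *v x) / N x)"

definition mat_smult :: "complex \<Rightarrow> complex^'p^'p \<Rightarrow> complex^'p^'p" where
  "mat_smult c A = (\<chi> i j. c * A $ i $ j)"

definition Rmat :: "nat \<Rightarrow> (nat \<Rightarrow> complex) \<Rightarrow> (nat \<Rightarrow> nat) \<Rightarrow> complex^'p^'p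
     \<Rightarrow> (nat \<Rightarrow> nat \<Rightarrow> complex^'p^'p) \<Rightarrow> complex \<Rightarrow> complex^'p^'p" where
  "Rmat n a m C0 B lam = mat_smult lam (mat 1) - C0 +
     (\<Sum>j<n. \<Sum>k=1..m j. mat_smult (1 / (lam - a j) ^ k) (B j k))"

definition is_eigenvalue_R :: "nat \<Rightarrow> (nat \<Rightarrow> complex) \<Rightarrow> (nat \<Rightarrow> nat) \<Rightarrow> complex^'p^'p
     \<Rightarrow> (nat \<Rightarrow> nat \<Rightarrow> complex^'p^'p) \<Rightarrow> complex \<Rightarrow> bool" where
  "is_eigenvalue_R n a m C0 B lam0 \<longleftrightarrow>
     lam0 \<notin> a ` {..<n} \<and> (\<exists>v. v \<noteq> 0 \<and> Rmat n a m C0 B lam0 *v v = 0)"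

end

theory Submission
  imports Defs
begin

lemma vn_0: "is_vector_norm N \<Longrightarrow> N 0 = 0"
  unfolding is_vector_norm_def by auto

lemma vn_neg: "is_vector_norm N \<Longrightarrow> N (-x) = N x"
proof -
  assume h: "is_vector_norm N"
  have "-x = (-1) *s x" by (simp add: vec_eq_iff)
  moreover have "N ((-1) *s x) = cmod (-1) * N x" using h unfolding is_vector_norm_def by blast
  ultimately show ?thesis by simp
qed

lemma vn_nonneg: "is_vector_norm N \<Longrightarrow> N x \<ge> 0"
proof -
  assume h: "is_vector_norm N"
  have "N (x + -x) \<le> N x + N (-x)" using h unfolding is_vector_norm_def by blast
  then show ?thesis using vn_0[OF h] vn_neg[OF h, of x] by simp
qed

lemma vn_diff: "is_vector_norm N \<Longrightarrow> N (x - y) \<le> N x + N y"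
  using vn_neg[of N y] unfolding is_vector_norm_def
  by (metis diff_conv_add_uminus)

lemma vn_sum: "is_vector_norm N \<Longrightarrow> N (sum f A) \<le> (\<Sum>i\<in>A. N (f i))"
proof (induction A rule: infinite_finite_induct)
  case (infinite A) then show ?case by (simp add: vn_0)
next
  case empty then show ?case by (simp add: vn_0)
next
  case (insert x F)
  have "N (f x + sum f F) \<le> N (f x) + N (sum f F)" using insert.prems unfolding is_vector_norm_def by blast
  then show ?case using insert by simp
qed

lemma vn_scaleR: "is_vector_norm N \<Longrightarrow> N (r *\<^sub>R x) = \<bar>r\<bar> * N x"
proof -
  assume h: "is_vector_norm N"
  have "r *\<^sub>R x = complex_of_real r *s x" by (simp add: vec_eq_iff of_real_def)
  then show ?thesis using h unfolding is_vector_norm_def by simp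
qed

lemma vn_upper: "is_vector_norm N \<Longrightarrow> \<exists>c. \<forall>x. N x \<le> c * norm x"
proof -
  assume h: "is_vector_norm N"
  define c where "c = (\<Sum>i\<in>UNIV. N (axis i (1::complex)))"
  have "N x \<le> c * norm x" for x
  proof -
    have "N x = N (\<Sum>i\<in>UNIV. x$i *s axis i 1)" by (simp add: basis_expansion)
    also have "\<dots> \<le> (\<Sum>i\<in>UNIV. N (x$i *s axis i 1))" by (rule vn_sum[OF h])
    also have "\<dots> = (\<Sum>i\<in>UNIV. cmod (x$i) * N (axis i 1))" using h unfolding is_vector_norm_def by simp
    also have "\<dots> \<le> (\<Sum>i\<in>UNIV. norm x * N (axis i 1))"
      by (intro sum_mono mult_right_mono Finite_Cartesian_Product.norm_nth_le vn_nonneg[OF h])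
    also have "\<dots> = c * norm x" by (simp add: c_def sum_distrib_left mult.commute)
    finally show ?thesis .
  qed
  then show ?thesis by blast
qed

lemma vn_lower: "is_vector_norm N \<Longrightarrow> \<exists>\<mu>>0. \<forall>x::complex^'p. \<mu> * norm x \<le> N x"
proof -
  assume h: "is_vector_norm N"
  obtain c where c: "\<And>x. N x \<le> c * norm x" using vn_upper[OF h] by blast
  have cont: "continuous_on (sphere (0::complex^'p) 1) N"
  proof -
    have "\<bar>N x - N y\<bar> \<le> c * norm (x - y)" for x y
    proof -
      have "N x \<le> N (x - y) + N y" using h unfolding is_vector_norm_def by (metis diff_add_cancel)
      moreover have "N y \<le> N (y - x) + N x" using h unfolding is_vector_norm_def by (metis diff_add_cancel)
      moreover have "N (y - x) = N (x - y)" using vn_neg[OF h, of "x - y"] by simp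
      ultimately show ?thesis using c[of "x - y"] by linarith
    qed
    note L = this
    have "continuous_on UNIV N"
    proof (rule continuous_onI)
      fix x e assume e: "(0::real) < e"
      define d where "d = e / (\<bar>c\<bar> + 1)"
      have d: "d > 0" using e by (simp add: d_def)
      have "dist (N x') (N x) \<le> e" if "dist x' x < d" for x'
      proof -
        have "dist (N x') (N x) \<le> c * norm (x' - x)" using L[of x' x] by (simp add: dist_real_def)
        also have "\<dots> \<le> \<bar>c\<bar> * norm (x' - x)" by (intro mult_right_mono) auto
        also have "\<dots> \<le> (\<bar>c\<bar> + 1) * d" using that by (intro mult_mono) (auto simp: dist_norm)
        also have "\<dots> = e" by (simp add: d_def)
        finally show ?thesis .
      qed
      then show "\<exists>d>0. \<forall>x'\<in>UNIV. dist x' x < d \<longrightarrow> dist (N x') (N x) \<le> e" using d by blast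
    qed
    then show ?thesis by (rule continuous_on_subset) simp
  qed
  have ne: "sphere (0::complex^'p) 1 \<noteq> {}" by simp
  obtain y where y: "y \<in> sphere 0 1" "\<And>x. x \<in> sphere 0 1 \<Longrightarrow> N y \<le> N x"
    using continuous_attains_inf[OF compact_sphere ne cont] by blast
  have "y \<noteq> 0" using y(1) by auto
  then have pos: "N y > 0" using vn_nonneg[OF h, of y] h unfolding is_vector_norm_def by force
  have "N y * norm x \<le> N x" for x
  proof (cases "x = 0")
    case True then show ?thesis by (simp add: vn_0[OF h])
  next
    case False
    have "N y \<le> N ((1 / norm x) *\<^sub>R x)" using y(2) False by simp
    also have "\<dots> = N x / norm x" by (simp add: vn_scaleR[OF h])
    finally show ?thesis using False by (simp add: field_simps)
  qed
  then show ?thesis using pos by blast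
qed


lemma ind_bdd: "is_vector_norm N \<Longrightarrow> bdd_above ((\<lambda>x. N (A *v x) / N x) ` {x. x \<noteq> 0})"
proof -
  assume h: "is_vector_norm N"
  obtain c where c: "\<And>x. N x \<le> c * norm x" using vn_upper[OF h] by blast
  obtain \<mu> where mu: "\<mu> > 0" "\<And>x. \<mu> * norm x \<le> N x" using vn_lower[OF h] by blast
  obtain K where K: "K > 0" "\<And>x. norm (A *v x) \<le> norm x * K"
    using bounded_linear.pos_bounded[OF matrix_vector_mul_bounded_linear[of A]] by blast
  have "N (A *v x) / N x \<le> \<bar>c\<bar> * K / \<mu>" if "x \<noteq> 0" for x
  proof -
    have Npos: "N x > 0" using that h vn_nonneg[OF h, of x] unfolding is_vector_norm_def by force
    have "N (A *v x) \<le> \<bar>c\<bar> * norm (A *v x)" using c[of "A *v x"] by (smt (verit) abs_ge_self mult_right_mono norm_ge_zero)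
    also have "\<dots> \<le> \<bar>c\<bar> * (norm x * K)" by (intro mult_left_mono K(2)) auto
    also have "\<dots> = (\<bar>c\<bar> * K / \<mu>) * (\<mu> * norm x)" using mu(1) by (simp add: field_simps)
    also have "\<dots> \<le> (\<bar>c\<bar> * K / \<mu>) * N x" using mu K by (intro mult_left_mono) auto
    finally show ?thesis using Npos by (simp add: divide_le_eq)
  qed
  then show ?thesis by (intro bdd_aboveI2[where M="\<bar>c\<bar> * K / \<mu>"]) auto
qed

lemma ind_le: "is_vector_norm N \<Longrightarrow> N (A *v x) \<le> induced_norm N A * N x"
proof (cases "x = 0")
  case True assume h: "is_vector_norm N"
  then show ?thesis using True by (simp add: vn_0)
next
  case False assume h: "is_vector_norm N"
  have Npos: "N x > 0" using False h vn_nonneg[OF h, of x] unfolding is_vector_norm_def by force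
  have "N (A *v x) / N x \<le> induced_norm N A"
    unfolding induced_norm_def using ind_bdd[OF h, of A] False by (intro cSUP_upper) auto
  then show ?thesis using Npos by (simp add: divide_le_eq)
qed

lemma ind_nonneg: fixes A :: "complex^'p^'p" shows "is_vector_norm N \<Longrightarrow> induced_norm N A \<ge> 0"
proof -
  assume h: "is_vector_norm N"
  define x where "x = (axis undefined (1::complex) :: complex^'p)"
  have "x \<noteq> 0" by (simp add: x_def)
  then have "N (A *v x) / N x \<le> induced_norm N A"
    unfolding induced_norm_def using ind_bdd[OF h, of A] by (intro cSUP_upper) auto
  moreover have "N (A *v x) / N x \<ge> 0" using vn_nonneg[OF h] by simp
  ultimately show ?thesis by linarith
qed

lemma mat_smult_mv: "mat_smult c A *v x = c *s (A *v x)"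
  by (simp add: vec_eq_iff mat_smult_def matrix_vector_mult_def sum_distrib_left mult.assoc)

lemma sum_mv: "(sum f S) *v x = (\<Sum>i\<in>S. f i *v x)"
  by (induction S rule: infinite_finite_induct) (auto simp: matrix_vector_mult_add_rdistrib)

lemma smult_mv: "(c *s (x::complex^'p)) + (-(c *s x)) = 0" by simp


theorem corollary3p11:
  fixes n :: nat and a :: "nat \<Rightarrow> complex" and m :: "nat \<Rightarrow> nat"
    and C0 :: "complex^'p^'p" and B :: "nat \<Rightarrow> nat \<Rightarrow> complex^'p^'p"
    and N :: "complex^'p \<Rightarrow> real" and lam0 :: complex
  assumes "n \<ge> 1"
    and "inj_on a {..<n}"
    and "\<forall>j<n. m j \<ge> 1"
    and "is_vector_norm N"
    and "is_eigenvalue_R n a m C0 B lam0"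
  shows "cmod lam0 \<le>
     max (Max {cmod (a j) + cos (pi / (real (m j) + 1)) | j. j < n}) (induced_norm N C0)
     + 1/2 * (sqrt (\<Sum>j<n. real (m j))
              + sqrt (\<Sum>j<n. \<Sum>k=1..m j. (induced_norm N (B j k))\<^sup>2))"
proof -
  note h = assms(4)
  define b where "b j k = induced_norm N (B j k)" for j k
  define d where "d j = cmod (lam0 - a j)" for j
  define cj where "cj j = cos (pi / (real (m j) + 1))" for j
  define M where "M = max (Max {cmod (a j) + cos (pi / (real (m j) + 1)) | j. j < n}) (induced_norm N C0)"
  define S where "S = (\<Sum>j<n. real (m j))"
  define Bs where "Bs = (\<Sum>j<n. \<Sum>k=1..m j. (b j k)\<^sup>2)"
  define t where "t = 1/2 * (sqrt S + sqrt Bs)"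
  obtain v where v: "v \<noteq> 0" "Rmat n a m C0 B lam0 *v v = 0" and notin: "lam0 \<notin> a ` {..<n}"
    using assms(5) unfolding is_eigenvalue_R_def by blast
  have dpos: "d j > 0" if "j < n" for j using notin that by (auto simp: d_def)
  have Nv: "N v > 0" using v(1) h vn_nonneg[OF h, of v] unfolding is_vector_norm_def by force
  have bnn: "b j k \<ge> 0" for j k unfolding b_def by (rule ind_nonneg[OF h])
  define T where "T = (\<Sum>j<n. \<Sum>k=1..m j. (1 / (lam0 - a j) ^ k) *s (B j k *v v))"
  have Rv: "Rmat n a m C0 B lam0 *v v = lam0 *s v - C0 *v v + T"
    unfolding Rmat_def T_def
    by (simp add: matrix_vector_mult_add_rdistrib matrix_vector_mult_diff_rdistrib sum_mv mat_smult_mv)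
  have eq: "lam0 *s v = C0 *v v - T" using v(2) Rv by (simp add: algebra_simps eq_neg_iff_add_eq_0)
  have NT: "N T \<le> (\<Sum>j<n. \<Sum>k=1..m j. b j k / d j ^ k) * N v"
  proof -
    have "N T \<le> (\<Sum>j<n. N (\<Sum>k=1..m j. (1 / (lam0 - a j) ^ k) *s (B j k *v v)))"
      unfolding T_def by (rule vn_sum[OF h])
    also have "\<dots> \<le> (\<Sum>j<n. \<Sum>k=1..m j. N ((1 / (lam0 - a j) ^ k) *s (B j k *v v)))"
      by (intro sum_mono vn_sum[OF h])
    also have "\<dots> \<le> (\<Sum>j<n. \<Sum>k=1..m j. b j k / d j ^ k * N v)"
    proof (intro sum_mono)
      fix j k
      have "N ((1 / (lam0 - a j) ^ k) *s (B j k *v v)) = cmod (1 / (lam0 - a j) ^ k) * N (B j k *v v)"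
        using h unfolding is_vector_norm_def by blast
      also have "\<dots> = (1 / d j ^ k) * N (B j k *v v)" by (simp add: d_def norm_divide norm_power)
      also have "\<dots> \<le> (1 / d j ^ k) * (b j k * N v)"
        unfolding b_def by (intro mult_left_mono ind_le[OF h]) (simp add: d_def)
      finally show "N ((1 / (lam0 - a j) ^ k) *s (B j k *v v)) \<le> b j k / d j ^ k * N v" by simp
    qed
    also have "\<dots> = (\<Sum>j<n. \<Sum>k=1..m j. b j k / d j ^ k) * N v" by (simp add: sum_distrib_right)
    finally show ?thesis .
  qed
  have main: "cmod lam0 \<le> induced_norm N C0 + (\<Sum>j<n. \<Sum>k=1..m j. b j k / d j ^ k)"
  proof -
    have "cmod lam0 * N v = N (lam0 *s v)" using h unfolding is_vector_norm_def by simp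
    also have "\<dots> \<le> N (C0 *v v) + N T" unfolding eq by (rule vn_diff[OF h])
    also have "\<dots> \<le> induced_norm N C0 * N v + (\<Sum>j<n. \<Sum>k=1..m j. b j k / d j ^ k) * N v"
      using NT ind_le[OF h, of C0 v] by linarith
    finally show ?thesis using Nv by (simp add: distrib_right[symmetric])
  qed
  show ?thesis
  proof (rule ccontr)
    assume "\<not> ?thesis"
    then have gt: "cmod lam0 > M + t" unfolding M_def t_def S_def Bs_def b_def by simp
    define x where "x = cmod lam0 - M"
    have Sge: "S \<ge> real (m j)" if "j < n" for j
      unfolding S_def using that by (intro member_le_sum) auto
    have S1: "S \<ge> 1" using Sge[of 0] assms(1,3) by auto
    have Bs0: "Bs \<ge> 0" unfolding Bs_def by (intro sum_nonneg) auto
    have t0: "t \<ge> sqrt S / 2" unfolding t_def using Bs0 by simp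
    have xt: "x > t" using gt x_def by simp
    have cj0: "cj j \<ge> 0" if "j < n" for j
    proof -
      have "pi / (real (m j) + 1) \<le> pi / 2" using assms(3) that by (intro divide_left_mono) auto
      moreover have "pi / (real (m j) + 1) \<ge> 0" by simp
      ultimately show ?thesis unfolding cj_def using cos_ge_zero[of "pi / (real (m j) + 1)"] pi_gt_zero by linarith
    qed
    have dx: "d j \<ge> x + cj j" if "j < n" for j
    proof -
      have "cmod (a j) + cj j \<in> {cmod (a j) + cos (pi / (real (m j) + 1)) | j. j < n}"
        using that unfolding cj_def by blast
      then have "cmod (a j) + cj j \<le> M" unfolding M_def by (intro max.coboundedI1 Max_ge) auto
      moreover have "d j \<ge> cmod lam0 - cmod (a j)" unfolding d_def by (metis norm_triangle_ineq2)
      ultimately show ?thesis unfolding x_def by linarith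
    qed
    have dk: "d j ^ k \<ge> x" if "j < n" "k \<in> {1..m j}" for j k
    proof (cases "k = 1")
      case True then show ?thesis using dx[OF that(1)] cj0[OF that(1)] by simp
    next
      case False
      then have m2: "m j \<ge> 2" using that by auto
      have "cj j \<ge> 1/2"
      proof -
        have "pi / (real (m j) + 1) \<le> pi / 3" using m2 by (intro divide_left_mono) auto
        then have "cos (pi / 3) \<le> cos (pi / (real (m j) + 1))"
          by (intro cos_monotone_0_pi_le) auto
        then show ?thesis unfolding cj_def by (simp add: cos_60)
      qed
      moreover have "sqrt S \<ge> sqrt 2" using Sge[OF that(1)] m2 by simp
      moreover have "sqrt 2 > (1::real)" by simp
      ultimately have "d j \<ge> 1" using dx[OF that(1)] xt t0 by linarith
      then have "d j \<le> d j ^ k" using that False by (intro self_le_power) auto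
      then show ?thesis using dx[OF that(1)] cj0[OF that(1)] by linarith
    qed
    have "sqrt S \<ge> 1" using S1 by simp
    then have x0: "x > 0" using xt t0 by linarith
    have "x \<le> (\<Sum>j<n. \<Sum>k=1..m j. b j k / d j ^ k)" using main x_def unfolding M_def by linarith
    also have "\<dots> \<le> (\<Sum>j<n. \<Sum>k=1..m j. b j k / x)"
    proof (intro sum_mono)
      fix j k assume "j \<in> {..<n}" "k \<in> {1..m j}"
      then have "x \<le> d j ^ k" "0 < d j ^ k * x" using dk x0 dpos by auto
      then show "b j k / d j ^ k \<le> b j k / x" using x0 bnn by (intro divide_left_mono) auto
    qed
    also have "\<dots> = (\<Sum>j<n. \<Sum>k=1..m j. b j k) / x" by (simp add: sum_divide_distrib)
    finally have x2: "x * x \<le> (\<Sum>j<n. \<Sum>k=1..m j. b j k)" using x0 by (simp add: le_divide_eq)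
    define I where "I = (SIGMA j:{..<n}. {1..m j})"
    have sumI: "(\<Sum>j<n. \<Sum>k=1..m j. f j k) = (\<Sum>(j,k)\<in>I. f j k)" for f :: "nat \<Rightarrow> nat \<Rightarrow> real"
      unfolding I_def by (rule sum.Sigma) auto
    have cardI: "real (card I) = S" unfolding I_def S_def by simp
    have "(\<Sum>(j,k)\<in>I. 1 * b j k)\<^sup>2 \<le> (\<Sum>(j,k)\<in>I. 1\<^sup>2) * (\<Sum>(j,k)\<in>I. (b j k)\<^sup>2)"
      using Cauchy_Schwarz_ineq_sum[of "\<lambda>_. 1" "\<lambda>(j,k). b j k" I]
      by (simp add: case_prod_unfold)
    then have "(\<Sum>j<n. \<Sum>k=1..m j. b j k)\<^sup>2 \<le> S * Bs"
      unfolding sumI[of b] Bs_def sumI[of "\<lambda>j k. (b j k)\<^sup>2"] cardI[symmetric] by simp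
    then have "(\<Sum>j<n. \<Sum>k=1..m j. b j k) \<le> sqrt (S * Bs)"
      by (rule real_le_rsqrt)
    also have "\<dots> = sqrt S * sqrt Bs" by (simp add: real_sqrt_mult)
    also have "\<dots> \<le> t * t"
    proof -
      have "0 \<le> (sqrt S - sqrt Bs)\<^sup>2" by simp
      moreover have "Bs \<ge> 0" unfolding Bs_def by (intro sum_nonneg) auto
      moreover have "(sqrt Bs)\<^sup>2 = Bs" "(sqrt S)\<^sup>2 = S" using S1 calculation(2) by auto
      ultimately show ?thesis unfolding t_def by (simp add: power2_eq_square algebra_simps)
    qed
    also have "\<dots> < x * x" proof -
      have "t \<ge> 0" using t0 \<open>sqrt S \<ge> 1\<close> by linarith
      then show ?thesis using xt x0 by (intro mult_strict_mono) auto
    qed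
    finally show False using x2 by simp
  qed
qed

end
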